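(* Let $G$ be a finite simple graph. Then for every simplex $\sigma$ of $\mathrm{M}(G)$ and every codimension-one face $\tau$ of $\sigma$ with $J(m_\tau)<J(m_\sigma)$ one has $J(m_\tau)=J(m_\sigma)-1$; thus $\partial_d$ has bidegree $(-1,-1)$ on $\widehat{C}(G)$. Moreover $\partial_d\circ\partial_d=0$, so $(\widehat{C}(G),\partial_d)$ is a chain complex.
   Context: A finite simple graph $G$ is regarded as a simplicial complex of dimension at most $1$; its face poset $\mathcal{F}(G)$ is the directed graph with vertices the vertices and edges of $G$ and a directed edge $e\to v$ whenever $v$ is an endpoint of the edge $e$. A matching on $\mathcal{F}(G)$ is a set $m$ of edges of $\mathcal{F}(G)$, no two sharing an endpoint. Given a matching $m$, let $\mathcal{F}_m(G)$ be obtained from $\mathcal{F}(G)$ by reversing every edge in $m$; a directed cycle of $\mathcal{F}_m(G)$ (closed directed path without repeated vertices) is supported by $m$, and $J(m)$ is the number of directed cycles supported by $m$. The matching complex $\mathrm{M}(G)$ has vertex set the edges of $\mathcal{F}(G)$ and simplices the nonempty matchings; $m_\sigma$ denotes the matching of a simplex $\sigma$. Let $\widehat{C}_i^j(G)$ be the $\mathbb{F}_2$-vector space with basis the $i$-dimensional simplices $\sigma$ of $\mathrm{M}(G)$ with $J(m_\sigma)=j$, and $\widehat{C}(G)=\bigoplus_{i,j}\widehat{C}_i^j(G)$. The simplicial boundary $\partial$ sends $\sigma$ to the mod-2 sum of its codimension-one faces. $\partial_J(\sigma)$ is the sum of those faces $\tau$ with $J(m_\tau)=J(m_\sigma)$,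 and $\partial_d=\partial-\partial_J$. *)

theory Defs
  imports Main
begin

definition simple_graph :: "'a set \<Rightarrow> 'a set set \<Rightarrow> bool" where
  "simple_graph V E \<longleftrightarrow> finite V \<and> (\<forall>e\<in>E. e \<subseteq> V \<and> card e = 2)"

text \<open>Face poset F(G): vertices are Inl v (vertices of G) and Inr e (edges of G);
  a directed edge e \<rightarrow> v whenever v is an endpoint of e.\<close>
type_synonym 'a fnode = "'a + 'a set"
type_synonym 'a farc = "'a fnode \<times> 'a fnode"

definition fp_arcs :: "'a set set \<Rightarrow> 'a farc set" where
  "fp_arcs E = {(Inr e, Inl v) | e v. e \<in> E \<and> v \<in> e}"

definition is_matching :: "'a set set \<Rightarrow> 'a farc set \<Rightarrow> bool" where
  "is_matching E m \<longleftrightarrow> m \<subseteq> fp_arcs E \<and>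
     (\<forall>a\<in>m. \<forall>b\<in>m. a \<noteq> b \<longrightarrow> {fst a, snd a} \<inter> {fst b, snd b} = {})"

definition fm_arcs :: "'a set set \<Rightarrow> 'a farc set \<Rightarrow> 'a farc set" where
  "fm_arcs E m = (fp_arcs E - m) \<union> (\<lambda>(x, y). (y, x)) ` m"

definition directed_cycle :: "('b \<times> 'b) set \<Rightarrow> ('b \<times> 'b) set \<Rightarrow> bool" where
  "directed_cycle A C \<longleftrightarrow> (\<exists>xs. length xs \<ge> 2 \<and> distinct xs \<and>
     C = {(xs ! i, xs ! ((i + 1) mod length xs)) | i. i < length xs} \<and> C \<subseteq> A)"

definition J :: "'a set set \<Rightarrow> 'a farc set \<Rightarrow> nat" where
  "J E m = card {C. directed_cycle (fm_arcs E m) C}"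

definition simplex :: "'a set set \<Rightarrow> 'a farc set \<Rightarrow> bool" where
  "simplex E \<sigma> \<longleftrightarrow> \<sigma> \<noteq> {} \<and> is_matching E \<sigma>"

definition codim1_face :: "'a farc set \<Rightarrow> 'a farc set \<Rightarrow> bool" where
  "codim1_face \<tau> \<sigma> \<longleftrightarrow> \<tau> \<noteq> {} \<and> (\<exists>a\<in>\<sigma>. \<tau> = \<sigma> - {a})"

text \<open>Chains over F_2: finite sets of simplices (mod-2 formal sums).
  partial_d of a basis simplex = faces with different J (since partial_d = partial - partial_J).\<close>
definition dd_simplex :: "'a set set \<Rightarrow> 'a farc set \<Rightarrow> 'a farc set set" where
  "dd_simplex E \<sigma> = {\<tau>. codim1_face \<tau> \<sigma> \<and> J E \<tau> \<noteq> J E \<sigma>}"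

definition dd :: "'a set set \<Rightarrow> 'a farc set set \<Rightarrow> 'a farc set set" where
  "dd E c = {\<tau>. odd (card {\<sigma>\<in>c. \<tau> \<in> dd_simplex E \<sigma>})}"

end

theory Submission imports Defs begin

definition rv :: "'b \<times> 'b \<Rightarrow> 'b \<times> 'b" where "rv a = (snd a, fst a)"
definition cyc :: "'a set set \<Rightarrow> 'a farc set \<Rightarrow> 'a farc set set" where
  "cyc E m = {C. directed_cycle (fm_arcs E m) C}"
definition oncyc :: "'a set set \<Rightarrow> 'a farc set \<Rightarrow> 'a farc \<Rightarrow> bool" where
  "oncyc E m a \<longleftrightarrow> (\<exists>C\<in>cyc E m. rv a \<in> C)"

lemma fm_alt: "fm_arcs E m = (fp_arcs E - m) \<union> rv ` m"
proof -
  have "(\<lambda>(x, y). (y, x)) = (rv :: 'b \<times> 'b \<Rightarrow> _)" by (auto simp: rv_def fun_eq_iff)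
  thus ?thesis unfolding fm_arcs_def by (simp add: rv_def[abs_def] case_prod_beta')
qed

lemma fin_E: "simple_graph V E \<Longrightarrow> finite E"
  unfolding simple_graph_def by (meson Pow_iff finite_Pow_iff finite_subset subsetI)

lemma fin_fp: "simple_graph V E \<Longrightarrow> finite (fp_arcs E)"
proof -
  assume a: "simple_graph V E"
  have "fp_arcs E \<subseteq> (Inr ` E) \<times> (Inl ` V)"
    using a unfolding fp_arcs_def simple_graph_def by auto
  moreover have "finite ((Inr ` E) \<times> (Inl ` V))" using fin_E[OF a] a
    unfolding simple_graph_def by auto
  ultimately show ?thesis by (rule finite_subset)
qed

lemma fin_match: "simple_graph V E \<Longrightarrow> is_matching E m \<Longrightarrow> finite m"
  using fin_fp unfolding is_matching_def by (metis finite_subset)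

lemma fin_cyc: "simple_graph V E \<Longrightarrow> is_matching E m \<Longrightarrow> finite (cyc E m)"
proof -
  assume a: "simple_graph V E" "is_matching E m"
  have "finite (fm_arcs E m)" using fin_fp[OF a(1)] fin_match[OF a] unfolding fm_alt by auto
  moreover have "cyc E m \<subseteq> Pow (fm_arcs E m)" unfolding cyc_def directed_cycle_def by auto
  ultimately show ?thesis by (meson finite_Pow_iff finite_subset)
qed

lemma match_sub: "is_matching E m \<Longrightarrow> m' \<subseteq> m \<Longrightarrow> is_matching E m'"
  unfolding is_matching_def by blast

lemma dc_sub: "directed_cycle A C \<Longrightarrow> C \<subseteq> A"
  unfolding directed_cycle_def by auto

lemma dc_mono: "directed_cycle A C \<Longrightarrow> C \<subseteq> B \<Longrightarrow> directed_cycle B C"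
  unfolding directed_cycle_def by auto

lemma dc_pred: "directed_cycle A C \<Longrightarrow> (x,y) \<in> C \<Longrightarrow> \<exists>z. (z,x) \<in> C"
proof -
  assume "directed_cycle A C" "(x,y) \<in> C"
  then obtain xs where xs: "length xs \<ge> 2" "C = {(xs ! i, xs ! ((i + 1) mod length xs)) | i. i < length xs}"
    unfolding directed_cycle_def by blast
  then obtain i where i: "i < length xs" "x = xs ! i" using \<open>(x,y) \<in> C\<close> by auto
  let ?n = "length xs"
  define j where "j = (i + ?n - 1) mod ?n"
  have "j < ?n" unfolding j_def using xs(1) by (intro mod_less_divisor) linarith
  moreover have "(j + 1) mod ?n = i"
  proof -
    have "(j + 1) mod ?n = Suc (i + ?n - 1) mod ?n" unfolding j_def by (simp add: mod_Suc_eq)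
    also have "Suc (i + ?n - 1) = i + ?n" using xs(1) by simp
    also have "(i + ?n) mod ?n = i" using i(1) by simp
    finally show ?thesis .
  qed
  ultimately have "(xs ! j, x) \<in> C" using xs(2) i(2) by force
  thus ?thesis by blast
qed


lemma fp_shape: "a \<in> fp_arcs E \<Longrightarrow> \<exists>e v. a = (Inr e, Inl v) \<and> e \<in> E \<and> v \<in> e"
  unfolding fp_arcs_def by auto

lemma fm_remove:
  assumes "is_matching E m" "a \<in> m"
  shows "fm_arcs E (m - {a}) = (fm_arcs E m - {rv a}) \<union> {a}"
proof -
  have "a \<in> fp_arcs E" using assms unfolding is_matching_def by auto
  then obtain e v where a: "a = (Inr e, Inl v)" using fp_shape by blast
  have "rv a \<notin> fp_arcs E" using a unfolding rv_def fp_arcs_def by auto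
  moreover have "a \<notin> rv ` m" using a assms(1) unfolding rv_def is_matching_def fp_arcs_def by auto
  moreover have "inj rv" unfolding rv_def inj_def by auto
  ultimately show ?thesis unfolding fm_alt using assms(2) \<open>a \<in> fp_arcs E\<close>
    by (auto simp: inj_image_mem_iff[OF \<open>inj rv\<close>] inj_eq[OF \<open>inj rv\<close>])
qed

lemma no_in_arc:
  assumes "is_matching E m" "a \<in> m" "(z, fst a) \<in> fm_arcs E (m - {a})"
  shows False
proof -
  have "a \<in> fp_arcs E" using assms unfolding is_matching_def by auto
  then obtain e v where a: "a = (Inr e, Inl v)" using fp_shape by blast
  from assms(3) have "(z, fst a) \<in> fp_arcs E - (m - {a}) \<or> (z, fst a) \<in> rv ` (m - {a})"
    unfolding fm_alt by auto
  thus False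
  proof
    assume "(z, fst a) \<in> fp_arcs E - (m - {a})"
    thus False using a fp_shape by fastforce
  next
    assume "(z, fst a) \<in> rv ` (m - {a})"
    then obtain b where b: "b \<in> m" "b \<noteq> a" "(z, fst a) = rv b" by auto
    hence "fst b = fst a" unfolding rv_def by auto
    thus False using assms(1,2) b unfolding is_matching_def by blast
  qed
qed

lemma cyc_remove:
  assumes "is_matching E m" "a \<in> m"
  shows "directed_cycle (fm_arcs E (m - {a})) C \<longleftrightarrow> directed_cycle (fm_arcs E m) C \<and> rv a \<notin> C"
proof
  assume d: "directed_cycle (fm_arcs E (m - {a})) C"
  have "a \<notin> C"
  proof
    assume "a \<in> C"
    then obtain z where "(z, fst a) \<in> C" using dc_pred[OF d, of "fst a" "snd a"] by auto
    thus False using dc_sub[OF d] no_in_arc[OF assms] by blast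
  qed
  hence "C \<subseteq> fm_arcs E m - {rv a}" using dc_sub[OF d] fm_remove[OF assms] by auto
  thus "directed_cycle (fm_arcs E m) C \<and> rv a \<notin> C" using dc_mono[OF d] by auto
next
  assume h: "directed_cycle (fm_arcs E m) C \<and> rv a \<notin> C"
  hence "C \<subseteq> fm_arcs E (m - {a})" using dc_sub[of "fm_arcs E m" C] fm_remove[OF assms] by blast
  thus "directed_cycle (fm_arcs E (m - {a})) C" using h dc_mono by blast
qed

lemma card2_eq: "card e = 2 \<Longrightarrow> u \<in> e \<Longrightarrow> u' \<in> e \<Longrightarrow> w \<in> e \<Longrightarrow> u \<noteq> w \<Longrightarrow> u' \<noteq> w \<Longrightarrow> u = u'"
  by (auto simp: card_2_iff)

lemma det:
  assumes g: "simple_graph V E" and mm: "is_matching E m"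
    and "(z,x) \<in> fm_arcs E m" "(x,y) \<in> fm_arcs E m" "(x,y') \<in> fm_arcs E m"
  shows "y = y'"
proof (cases x)
  case (Inl v)
  have "(x,y) \<notin> fp_arcs E" "(x,y') \<notin> fp_arcs E" using Inl fp_shape by fastforce+
  hence "(y,x) \<in> m" "(y',x) \<in> m" using assms(4,5) unfolding fm_alt rv_def by auto
  thus ?thesis using mm unfolding is_matching_def by fastforce
next
  case (Inr e)
  have "(z,x) \<notin> fp_arcs E" using Inr fp_shape by fastforce
  hence zx: "(x,z) \<in> m" using assms(3) unfolding fm_alt rv_def by auto
  hence "(x,z) \<in> fp_arcs E" using mm unfolding is_matching_def by auto
  then obtain w where w: "z = Inl w" "w \<in> e" "e \<in> E" using Inr unfolding fp_arcs_def by auto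
  have "(x,y) \<notin> rv ` m" "(x,y') \<notin> rv ` m" using Inr mm
    unfolding rv_def is_matching_def fp_arcs_def by auto
  hence "(x,y) \<in> fp_arcs E - m" "(x,y') \<in> fp_arcs E - m" using assms(4,5) unfolding fm_alt by auto
  then obtain u u' where u: "y = Inl u" "u \<in> e" "y' = Inl u'" "u' \<in> e"
    using Inr unfolding fp_arcs_def by auto
  have "u \<noteq> w" "u' \<noteq> w" using zx w u Inr \<open>(x,y) \<in> fp_arcs E - m\<close> \<open>(x,y') \<in> fp_arcs E - m\<close> by auto
  moreover have "card e = 2" using g w unfolding simple_graph_def by auto
  ultimately show ?thesis using card2_eq u w by metis
qed


lemma uniq_sub:
  assumes g: "simple_graph V E" and mm: "is_matching E m"
    and c1: "directed_cycle (fm_arcs E m) C1" and c2: "directed_cycle (fm_arcs E m) C2"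
    and "(x,y1) \<in> C1" "(x,y2) \<in> C2"
  shows "C1 \<subseteq> C2"
proof -
  obtain xs where xs: "length xs \<ge> 2" "C1 = {(xs ! i, xs ! ((i + 1) mod length xs)) | i. i < length xs}"
    using c1 unfolding directed_cycle_def by blast
  obtain ys where ys: "length ys \<ge> 2" "C2 = {(ys ! i, ys ! ((i + 1) mod length ys)) | i. i < length ys}"
    using c2 unfolding directed_cycle_def by blast
  let ?n = "length xs" and ?n' = "length ys"
  obtain i0 where i0: "i0 < ?n" "x = xs ! i0" using assms(5) xs(2) by auto
  obtain j0 where j0: "j0 < ?n'" "x = ys ! j0" using assms(6) ys(2) by auto
  have arc1: "(xs ! (k mod ?n), xs ! (Suc k mod ?n)) \<in> C1" for k
  proof -
    have "k mod ?n < ?n" using xs(1) by (intro mod_less_divisor) linarith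
    thus ?thesis unfolding xs(2) by (auto simp: mod_Suc_eq intro!: exI[of _ "k mod ?n"])
  qed
  have arc2: "(ys ! (k mod ?n'), ys ! (Suc k mod ?n')) \<in> C2" for k
  proof -
    have "k mod ?n' < ?n'" using ys(1) by (intro mod_less_divisor) linarith
    thus ?thesis unfolding ys(2) by (auto simp: mod_Suc_eq intro!: exI[of _ "k mod ?n'"])
  qed
  have key: "xs ! ((i0 + k) mod ?n) = ys ! ((j0 + k) mod ?n')" for k
  proof (induction k)
    case 0 thus ?case using i0 j0 by simp
  next
    case (Suc k)
    let ?p = "xs ! ((i0 + k) mod ?n)"
    have a1: "(?p, xs ! (Suc (i0 + k) mod ?n)) \<in> C1" using arc1 by blast
    have a2: "(?p, ys ! (Suc (j0 + k) mod ?n')) \<in> C2" using arc2 Suc.IH by metis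
    obtain z where "(z, ?p) \<in> C1" using dc_pred[OF c1 a1] by blast
    hence "xs ! (Suc (i0 + k) mod ?n) = ys ! (Suc (j0 + k) mod ?n')"
      using det[OF g mm] a1 a2 dc_sub[OF c1] dc_sub[OF c2] by blast
    thus ?case by simp
  qed
  show ?thesis
  proof
    fix p assume "p \<in> C1"
    then obtain i where i: "i < ?n" "p = (xs ! i, xs ! ((i + 1) mod ?n))" using xs(2) by auto
    define k where "k = i + ?n - i0"
    have "i0 + k = i + ?n" unfolding k_def using i0 by simp
    have e1: "(i0 + k) mod ?n = i" using i \<open>i0 + k = i + ?n\<close> by simp
    have "i0 + Suc k = Suc i + ?n" using \<open>i0 + k = i + ?n\<close> by simp
    hence e2: "(i0 + Suc k) mod ?n = (i + 1) mod ?n" by (metis Suc_eq_plus1 mod_add_self2)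
    have "p = (ys ! ((j0 + k) mod ?n'), ys ! ((j0 + Suc k) mod ?n'))"
      using i key[of k] key[of "Suc k"] e1 e2 by simp
    thus "p \<in> C2" using arc2[of "j0 + k"] by simp
  qed
qed

lemma uniq:
  assumes g: "simple_graph V E" and mm: "is_matching E m"
    and "C1 \<in> cyc E m" "C2 \<in> cyc E m" "(x,y1) \<in> C1" "(x,y2) \<in> C2"
  shows "C1 = C2"
  using uniq_sub[OF g mm] assms unfolding cyc_def by blast

lemma J_remove:
  assumes g: "simple_graph V E" and mm: "is_matching E m" and am: "a \<in> m"
  shows "J E m = J E (m - {a}) + (if oncyc E m a then 1 else 0)"
proof -
  define Q where "Q = {C \<in> cyc E m. rv a \<in> C}"
  have c: "cyc E (m - {a}) = cyc E m - Q"
    unfolding Q_def cyc_def using cyc_remove[OF mm am] by auto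
  have "Q \<subseteq> cyc E m" unfolding Q_def by auto
  have fin: "finite (cyc E m)" using fin_cyc[OF g mm] .
  have cq: "card Q = (if oncyc E m a then 1 else 0)"
  proof (cases "oncyc E m a")
    case True
    then obtain C0 where "C0 \<in> Q" unfolding oncyc_def Q_def by auto
    have "C = C0" if "C \<in> Q" for C
      using uniq[OF g mm, of C C0 "fst (rv a)" "snd (rv a)" "snd (rv a)"] that \<open>C0 \<in> Q\<close>
      by (simp add: Q_def)
    hence "Q = {C0}" using \<open>C0 \<in> Q\<close> by blast
    thus ?thesis using True by simp
  next
    case False
    hence "Q = {}" unfolding oncyc_def Q_def by auto
    thus ?thesis using False by simp
  qed
  have "card (cyc E m) = card (cyc E m - Q) + card Q"
    using card_Diff_subset[OF finite_subset[OF \<open>Q \<subseteq> cyc E m\<close> fin] \<open>Q \<subseteq> cyc E m\<close>]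
      card_mono[OF fin \<open>Q \<subseteq> cyc E m\<close>] by simp
  thus ?thesis unfolding J_def using c cq unfolding cyc_def by simp
qed

lemma J_ne_iff:
  assumes g: "simple_graph V E" and mm: "is_matching E m" and am: "a \<in> m"
  shows "J E (m - {a}) \<noteq> J E m \<longleftrightarrow> oncyc E m a"
  using J_remove[OF assms] by auto

lemma part1:
  assumes g: "simple_graph V E"
  shows "simplex E \<sigma> \<and> codim1_face \<tau> \<sigma> \<and> J E \<tau> < J E \<sigma> \<longrightarrow> J E \<tau> = J E \<sigma> - 1"
proof
  assume h: "simplex E \<sigma> \<and> codim1_face \<tau> \<sigma> \<and> J E \<tau> < J E \<sigma>"
  then obtain a where a: "a \<in> \<sigma>" "\<tau> = \<sigma> - {a}" unfolding codim1_face_def by auto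
  have mm: "is_matching E \<sigma>" using h unfolding simplex_def by auto
  show "J E \<tau> = J E \<sigma> - 1" using J_remove[OF g mm a(1)] h a(2) by (auto split: if_splits)
qed


lemma dds_iff:
  assumes g: "simple_graph V E" and mm: "is_matching E \<sigma>"
  shows "\<tau> \<in> dd_simplex E \<sigma> \<longleftrightarrow> (\<exists>a\<in>\<sigma>. \<tau> = \<sigma> - {a} \<and> \<tau> \<noteq> {} \<and> oncyc E \<sigma> a)"
  unfolding dd_simplex_def codim1_face_def using J_ne_iff[OF g mm] by auto

lemma sym_cyc:
  assumes g: "simple_graph V E" and mm: "is_matching E \<sigma>"
    and ab: "a \<in> \<sigma>" "b \<in> \<sigma>" "a \<noteq> b" and h1: "oncyc E \<sigma> a" and h2: "oncyc E (\<sigma> - {a}) b"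
  shows "oncyc E \<sigma> b \<and> oncyc E (\<sigma> - {b}) a"
proof -
  obtain C2 where C2: "C2 \<in> cyc E (\<sigma> - {a})" "rv b \<in> C2" using h2 unfolding oncyc_def by auto
  hence C2': "C2 \<in> cyc E \<sigma>" "rv a \<notin> C2" using cyc_remove[OF mm ab(1)] unfolding cyc_def by auto
  obtain C1 where C1: "C1 \<in> cyc E \<sigma>" "rv a \<in> C1" using h1 unfolding oncyc_def by auto
  have "rv b \<notin> C1"
  proof
    assume "rv b \<in> C1"
    hence "C1 = C2" using uniq[OF g mm C1(1) C2'(1), of "fst (rv b)" "snd (rv b)" "snd (rv b)"] C2(2)
      by simp
    thus False using C1 C2' by simp
  qed
  hence "C1 \<in> cyc E (\<sigma> - {b})" using C1 cyc_remove[OF mm ab(2)] unfolding cyc_def by auto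
  thus ?thesis using C1 C2 C2' unfolding oncyc_def by auto
qed

lemma T_even:
  assumes g: "simple_graph V E" and mm: "is_matching E \<sigma>"
  shows "even (card {\<tau>. \<tau> \<in> dd_simplex E \<sigma> \<and> \<rho> \<in> dd_simplex E \<tau>})"
proof (cases "{\<tau>. \<tau> \<in> dd_simplex E \<sigma> \<and> \<rho> \<in> dd_simplex E \<tau>} = {}")
  case True thus ?thesis by (simp only: card.empty) simp
next
  case False
  let ?T = "{\<tau>. \<tau> \<in> dd_simplex E \<sigma> \<and> \<rho> \<in> dd_simplex E \<tau>}"
  from False obtain \<tau>0 where t0: "\<tau>0 \<in> dd_simplex E \<sigma>" "\<rho> \<in> dd_simplex E \<tau>0" by auto
  then obtain a where a: "a \<in> \<sigma>" "\<tau>0 = \<sigma> - {a}" "oncyc E \<sigma> a" using dds_iff[OF g mm] by auto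
  have m0: "is_matching E \<tau>0" using match_sub[OF mm] a by auto
  obtain b where b: "b \<in> \<tau>0" "\<rho> = \<tau>0 - {b}" "\<rho> \<noteq> {}" "oncyc E \<tau>0 b"
    using t0(2) dds_iff[OF g m0] by auto
  have ab: "b \<in> \<sigma>" "a \<noteq> b" using a b by auto
  have s: "oncyc E \<sigma> b \<and> oncyc E (\<sigma> - {b}) a" using sym_cyc[OF g mm a(1) ab(1) ab(2) a(3)] b(4) a(2) by simp
  have "?T = {\<sigma> - {a}, \<sigma> - {b}}"
  proof
    show "?T \<subseteq> {\<sigma> - {a}, \<sigma> - {b}}"
    proof
      fix \<tau> assume "\<tau> \<in> ?T"
      hence t: "\<tau> \<in> dd_simplex E \<sigma>" "\<rho> \<in> dd_simplex E \<tau>" by auto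
      then obtain a' where a': "a' \<in> \<sigma>" "\<tau> = \<sigma> - {a'}" using dds_iff[OF g mm] by auto
      have m1: "is_matching E \<tau>" using match_sub[OF mm] a' by auto
      obtain b' where b': "b' \<in> \<tau>" "\<rho> = \<tau> - {b'}" using t(2) dds_iff[OF g m1] by auto
      have "a' \<in> {a, b}"
      proof (rule ccontr)
        assume "a' \<notin> {a,b}"
        hence "a' \<in> \<rho>" using b a a' by auto
        thus False using b' a' by auto
      qed
      thus "\<tau> \<in> {\<sigma> - {a}, \<sigma> - {b}}" using a' by auto
    qed
  next
    have "\<sigma> - {b} \<in> dd_simplex E \<sigma>" using dds_iff[OF g mm] ab a s by auto
    moreover have mb: "is_matching E (\<sigma> - {b})" using match_sub[OF mm] by auto
    have "\<rho> \<in> dd_simplex E (\<sigma> - {b})" using dds_iff[OF g mb] ab a b s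
      by (auto intro!: bexI[of _ a])
    ultimately show "{\<sigma> - {a}, \<sigma> - {b}} \<subseteq> ?T" using t0 a(2) by auto
  qed
  moreover have "\<sigma> - {a} \<noteq> \<sigma> - {b}" using a ab by auto
  ultimately show ?thesis by simp
qed

lemma parity: "finite A \<Longrightarrow> even (sum f A) \<longleftrightarrow> even (card {x\<in>A. odd ((f x)::nat)})"
proof (induction A rule: finite_induct)
  case empty thus ?case by simp
next
  case (insert x A)
  have "{y \<in> insert x A. odd (f y)} = (if odd (f x) then insert x {y\<in>A. odd (f y)} else {y\<in>A. odd (f y)})"
    by auto
  moreover have "x \<notin> {y\<in>A. odd (f y)}" using insert by auto
  ultimately show ?case using insert by auto
qed


lemma card_filter_sum: "finite A \<Longrightarrow> card {x\<in>A. P x} = (\<Sum>x\<in>A. if P x then 1 else (0::nat))"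
  by (simp add: sum.If_cases Int_def)

lemma dd_fin: "simple_graph V E \<Longrightarrow> simplex E \<sigma> \<Longrightarrow> finite (dd_simplex E \<sigma>)"
proof -
  assume g: "simple_graph V E" "simplex E \<sigma>"
  hence mm: "is_matching E \<sigma>" unfolding simplex_def by auto
  have "dd_simplex E \<sigma> \<subseteq> (\<lambda>a. \<sigma> - {a}) ` \<sigma>" unfolding dd_simplex_def codim1_face_def by auto
  thus ?thesis using fin_match[OF g(1) mm] finite_subset by blast
qed

lemma part2:
  assumes g: "simple_graph V E"
  shows "finite c \<and> (\<forall>\<sigma>\<in>c. simplex E \<sigma>) \<longrightarrow> dd E (dd E c) = {}"
proof
  assume h: "finite c \<and> (\<forall>\<sigma>\<in>c. simplex E \<sigma>)"
  have mc: "\<And>\<sigma>. \<sigma> \<in> c \<Longrightarrow> is_matching E \<sigma>" using h unfolding simplex_def by auto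
  define S where "S = (\<Union>\<sigma>\<in>c. dd_simplex E \<sigma>)"
  have finS: "finite S" unfolding S_def using h dd_fin[OF g] by auto
  have DS: "dd E c \<subseteq> S"
  proof
    fix \<tau> assume "\<tau> \<in> dd E c"
    hence "card {\<sigma>\<in>c. \<tau> \<in> dd_simplex E \<sigma>} \<noteq> 0" unfolding dd_def by (metis (no_types) even_zero mem_Collect_eq)
    hence "{\<sigma>\<in>c. \<tau> \<in> dd_simplex E \<sigma>} \<noteq> {}" by (metis card.empty)
    thus "\<tau> \<in> S" unfolding S_def by auto
  qed
  show "dd E (dd E c) = {}"
  proof (rule ccontr)
    assume "dd E (dd E c) \<noteq> {}"
    then obtain \<rho> where r: "odd (card {\<tau> \<in> dd E c. \<rho> \<in> dd_simplex E \<tau>})" unfolding dd_def by auto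
    define R where "R = {\<tau>\<in>S. \<rho> \<in> dd_simplex E \<tau>}"
    define f where "f \<tau> = card {\<sigma>\<in>c. \<tau> \<in> dd_simplex E \<sigma>}" for \<tau>
    have finR: "finite R" unfolding R_def using finS by auto
    have eq: "{\<tau> \<in> dd E c. \<rho> \<in> dd_simplex E \<tau>} = {\<tau>\<in>R. odd (f \<tau>)}"
      unfolding R_def f_def using DS unfolding dd_def by auto
    have "sum f R = (\<Sum>\<tau>\<in>R. \<Sum>\<sigma>\<in>c. if \<tau> \<in> dd_simplex E \<sigma> then 1 else 0)"
      unfolding f_def using h card_filter_sum by (intro sum.cong) auto
    also have "\<dots> = (\<Sum>\<sigma>\<in>c. \<Sum>\<tau>\<in>R. if \<tau> \<in> dd_simplex E \<sigma> then 1 else 0)"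
      by (rule sum.swap)
    also have "\<dots> = (\<Sum>\<sigma>\<in>c. card {\<tau>. \<tau> \<in> dd_simplex E \<sigma> \<and> \<rho> \<in> dd_simplex E \<tau>})"
    proof (rule sum.cong)
      fix \<sigma> assume "\<sigma> \<in> c"
      hence "{\<tau>\<in>R. \<tau> \<in> dd_simplex E \<sigma>} = {\<tau>. \<tau> \<in> dd_simplex E \<sigma> \<and> \<rho> \<in> dd_simplex E \<tau>}"
        unfolding R_def S_def by auto
      thus "(\<Sum>\<tau>\<in>R. if \<tau> \<in> dd_simplex E \<sigma> then 1 else 0) = card {\<tau>. \<tau> \<in> dd_simplex E \<sigma> \<and> \<rho> \<in> dd_simplex E \<tau>}"
        using card_filter_sum[OF finR, of "\<lambda>\<tau>. \<tau> \<in> dd_simplex E \<sigma>"] by simp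
    qed simp
    finally have "even (sum f R)" using T_even[OF g mc] by (simp add: dvd_sum)
    hence "even (card {\<tau>\<in>R. odd (f \<tau>)})" using parity[OF finR] by simp
    thus False using r eq by simp
  qed
qed

theorem mainTheorem6:
  fixes V :: "'a set" and E :: "'a set set"
  assumes "simple_graph V E"
  shows "(\<forall>\<sigma> \<tau>. simplex E \<sigma> \<and> codim1_face \<tau> \<sigma> \<and> J E \<tau> < J E \<sigma> \<longrightarrow>
            J E \<tau> = J E \<sigma> - 1)
       \<and> (\<forall>c. finite c \<and> (\<forall>\<sigma>\<in>c. simplex E \<sigma>) \<longrightarrow> dd E (dd E c) = {})"
  using part1[OF assms] part2[OF assms] by blast

end
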